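(* For integers $m,j$ let $U(m,j):=\binom{m-j}{j}2^j$ if $0\le j$ and $2j\le m$, and $U(m,j):=0$ otherwise. For $t\ge0$ let $C_t:=\binom{2t}{t}2^t$ (so $C_t=U(3t,t)$), and for $t\ge1$ let \[D_t:=\sum_{j=0}^{t-1}U(3t,j)-\sum_{j\ge t+1}U(3t,j),\qquad B_t:=\sum_{j=0}^{t-1}U(3t-1,j)-\sum_{j\ge t+1}U(3t-1,j).\] Then for all $t\ge1$: (i) $D_t=C_{t-1}-C_{t-2}+C_{t-3}-\cdots+(-1)^{t-1}C_0$; (ii) $0<D_t<\tfrac12C_t$; (iii) $B_t=\tfrac12C_t-D_t$ and $0<B_t<\tfrac12C_t$; (iv) as formal power series, $\sum_{t\ge1}D_tz^t=\dfrac{z}{(1+z)\sqrt{1-8z}}$. *)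

theory Defs
  imports Complex_Main "HOL-Computational_Algebra.Formal_Power_Series"
begin

definition U :: "int \<Rightarrow> int \<Rightarrow> int" where
  "U m j = (if 0 \<le> j \<and> 2 * j \<le> m then int (nat (m - j) choose nat j) * 2 ^ nat j else 0)"

definition C :: "nat \<Rightarrow> int" where
  "C t = int ((2 * t) choose t) * 2 ^ t"

text \<open>The sums over j >= t+1 are finite: U(m,j) = 0 once 2j > m, so for m <= 3t
  the range t+1..3t contains all nonzero terms.\<close>
definition D :: "nat \<Rightarrow> int" where
  "D t = (\<Sum>j = 0..<t. U (int (3 * t)) (int j)) - (\<Sum>j \<in> {t+1..3*t}. U (int (3 * t)) (int j))"

definition B :: "nat \<Rightarrow> int" where
  "B t = (\<Sum>j = 0..<t. U (int (3 * t) - 1) (int j)) - (\<Sum>j \<in> {t+1..3*t}. U (int (3 * t) - 1) (int j))"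

definition sqrt_1m8z :: "real fps" where
  "sqrt_1m8z = fps_radical (\<lambda>k x. root k x) 2 (1 - 8 * fps_X)"

end

theory Submission
  imports Defs
begin

definition Pa :: "int \<Rightarrow> nat \<Rightarrow> int" where
  "Pa m n = (\<Sum>j<n. U m (int j))"

lemma U_neg: "m < 0 \<Longrightarrow> U m j = 0" by (simp add: U_def)
lemma U_negj: "j < 0 \<Longrightarrow> U m j = 0" by (simp add: U_def)
lemma U_big: "m < 2*j \<Longrightarrow> U m j = 0" by (simp add: U_def)

lemma U_pascal:
  assumes "m \<ge> 1" shows "U m j = U (m-1) j + 2 * U (m-2) (j-1)"
proof (cases "j \<le> 0")
  case True
  then show ?thesis using assms by (cases "j = 0") (auto simp: U_def)
next
  case False
  define i where "i = nat (j - 1)"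
  have j: "j = int i + 1" using False i_def by simp
  have ji: "nat j = Suc i" using j by simp
  show ?thesis
  proof (cases "2*j \<le> m - 1")
    case True
    define n where "n = nat (m - 1 - j)"
    have n: "m - 1 - j = int n" using True j n_def by simp
    have e1: "nat (m - j) = Suc n" using n by simp
    have e2: "nat (m-1-j) = n" using n by simp
    have e3: "nat (m-2-(j-1)) = n" using n by simp
    have "U m j = int (Suc n choose Suc i) * 2^Suc i" using True ji e1 j by (simp add: U_def)
    moreover have "U (m-1) j = int (n choose Suc i) * 2^Suc i" using True ji e2 j by (simp add: U_def)
    moreover have "U (m-2) (j-1) = int (n choose i) * 2^i" using True j e3 by (simp add: U_def)
    ultimately show ?thesis by (simp add: algebra_simps)
  next
    case F2: False
    show ?thesis
    proof (cases "2*j = m")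
      case True
      have "nat (m - j) = Suc i" using True j by simp
      then have "U m j = 2^Suc i" using True j ji by (simp add: U_def)
      moreover have "U (m-1) j = 0" using True by (simp add: U_def)
      moreover have "nat (m - 2 - (j-1)) = i" using True j by simp
      moreover have "U (m-2) (j-1) = 2^i" using True j \<open>nat (m - 2 - (j-1)) = i\<close> by (simp add: U_def)
      ultimately show ?thesis by simp
    next
      case False
      then show ?thesis using F2 by (simp add: U_def)
    qed
  qed
qed

lemma Pa_pascal:
  assumes "m \<ge> 1" shows "Pa m (Suc n) = Pa (m-1) (Suc n) + 2 * Pa (m-2) n"
proof -
  have "Pa m (Suc n) = (\<Sum>j<Suc n. U (m-1) (int j) + 2 * U (m-2) (int j - 1))"
    unfolding Pa_def using U_pascal[OF assms] by simp
  also have "\<dots> = Pa (m-1) (Suc n) + 2 * (\<Sum>j<Suc n. U (m-2) (int j - 1))"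
    by (simp add: Pa_def sum.distrib sum_distrib_left)
  also have "(\<Sum>j<Suc n. U (m-2) (int j - 1)) = Pa (m-2) n"
    unfolding sum.lessThan_Suc_shift Pa_def by (simp add: U_negj)
  finally show ?thesis .
qed

lemma Pa_Suc: "Pa m (Suc n) = Pa m n + U m (int n)" by (simp add: Pa_def)

lemma Pa_stable: assumes "m < 2 * int k" "k \<le> n" shows "Pa m n = Pa m k"
  using assms(2)
proof (induction n rule: dec_induct)
  case (step n)
  then show ?case using assms(1) by (simp add: Pa_Suc U_big)
qed simp

lemma S_closed: "3 * Pa (int m) (Suc m) = 2^(m+1) + (-1)^m \<and> 3 * Pa (int (Suc m)) (Suc (Suc m)) = 2^(m+2) + (-1)^(Suc m)"
proof (induction m)
  case 0
  then show ?case by (simp add: Pa_def U_def numeral_2_eq_2)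
next
  case (Suc m)
  have "Pa (int (Suc (Suc m))) (Suc (Suc (Suc m))) = Pa (int (Suc m)) (Suc (Suc (Suc m))) + 2 * Pa (int m) (Suc (Suc m))"
    using Pa_pascal[of "int (Suc (Suc m))" "Suc (Suc m)"] by simp
  also have "Pa (int (Suc m)) (Suc (Suc (Suc m))) = Pa (int (Suc m)) (Suc (Suc m))"
    by (rule Pa_stable) auto
  also have "Pa (int m) (Suc (Suc m)) = Pa (int m) (Suc m)"
    by (rule Pa_stable) auto
  finally show ?case using Suc by simp
qed

lemma S3: "3 * Pa (int (3*t)) (3*t+1) = 2 * 8^t + (-1)^t"
  using conjunct1[OF S_closed[of "3*t"]] by (simp add: power_mult)

lemma S3m: assumes "t \<ge> 1" shows "3 * Pa (int (3*t) - 1) (3*t+1) = 8^t - (-1)^t"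
proof -
  have "Pa (int (3*t) - 1) (3*t+1) = Pa (int (3*t-1)) (Suc (3*t-1))"
    using assms by (subst Pa_stable[of _ "Suc (3*t-1)"]) (auto simp: of_nat_diff)
  moreover have "3 * Pa (int (3*t-1)) (Suc (3*t-1)) = 2^(3*t) + (-1)^(3*t-1)"
    using conjunct1[OF S_closed[of "3*t-1"]] assms by simp
  moreover have "(-1::int)^(3*t-1) = - ((-1)^t)"
  proof -
    have "(-1::int)^(3*t) = (-1)^(3*t-1) * (-1)" using assms
      by (metis Suc_diff_1 mult_pos_pos power_Suc2 zero_less_numeral less_le_trans zero_less_one)
    then show ?thesis by (simp add: power_mult)
  qed
  ultimately show ?thesis by (simp add: power_mult)
qed

lemma U_C: "U (int (3*t)) (int t) = C t"
proof -
  have "nat (int (3*t) - int t) = 2*t" by simp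
  then show ?thesis by (simp add: U_def C_def)
qed

lemma U_C1: "4 * U (int (3*t) + 1) (int t) = C (Suc t)"
proof -
  have "nat (int (3*t) + 1 - int t) = 2*t+1" by simp
  then have "U (int (3*t) + 1) (int t) = int ((2*t+1) choose t) * 2^t" by (simp add: U_def)
  moreover have "(2*Suc t) choose (Suc t) = 2 * ((2*t+1) choose t)"
  proof -
    have "(2*Suc t) choose (Suc t) = ((2*t+1) choose t) + ((2*t+1) choose Suc t)" by simp
    moreover have "(2*t+1) choose Suc t = (2*t+1) choose t"
      using binomial_symmetric[of t "2*t+1"] by simp
    ultimately show ?thesis by simp
  qed
  ultimately show ?thesis by (simp add: C_def)
qed

lemma U_Cm: assumes "t \<ge> 1" shows "2 * U (int (3*t) - 1) (int t) = C t"
proof -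
  obtain s where t: "t = Suc s" using assms by (cases t) auto
  have "nat (int (3*t) - 1 - int t) = 2*s+1" using t by simp
  then have "U (int (3*t) - 1) (int t) = int ((2*s+1) choose t) * 2^t" using assms by (simp add: U_def)
  then have "U (int (3*t) - 1) (int t) = int ((2*s+1) choose Suc s) * 2^Suc s" using t by simp
  moreover have "(2*Suc s) choose (Suc s) = 2 * ((2*s+1) choose Suc s)"
  proof -
    have "(2*Suc s) choose (Suc s) = ((2*s+1) choose s) + ((2*s+1) choose Suc s)" by simp
    moreover have "(2*s+1) choose Suc s = (2*s+1) choose s"
      using binomial_symmetric[of s "2*s+1"] by simp
    ultimately show ?thesis by simp
  qed
  ultimately show ?thesis using t by (simp add: C_def)
qed

lemma step_ab:
  "2 * Pa (int (3*Suc t)) (Suc t) = 10 * Pa (int (3*t)) t + 12 * Pa (int (3*t) - 1) t + 6 * C t - C (Suc t) \<and>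
   Pa (int (3*Suc t) - 1) (Suc t) = 3 * Pa (int (3*t)) t + 2 * Pa (int (3*t) - 1) t + C t"
proof -
  define a where "a = Pa (int (3*t)) t"
  define b where "b = Pa (int (3*t) - 1) t"
  define u where "u = U (int (3*t) + 1) (int t)"
  define w1 where "w1 = Pa (int (3*t) + 1) (Suc t)"
  define w2 where "w2 = Pa (int (3*t) + 2) (Suc t)"
  define w3 where "w3 = Pa (int (3*t) + 3) (Suc t)"
  have uc: "U (3 * int t) (int t) = C t" using U_C[of t] by simp
  have h1: "w1 = a + C t + 2 * b"
    using Pa_pascal[of "int (3*t) + 1" t] unfolding w1_def a_def b_def
    by (simp add: Pa_Suc uc)
  have h2: "w2 = w1 + 2 * a"
    using Pa_pascal[of "int (3*t) + 2" t] unfolding w1_def w2_def a_def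
    by (simp add: add.commute)
  have h3: "w3 = w2 + 2 * (w1 - u)"
    using Pa_pascal[of "int (3*t) + 3" t] unfolding w1_def w2_def w3_def u_def
    by (simp add: Pa_Suc add.commute)
  have hu: "4 * u = C (Suc t)" unfolding u_def by (rule U_C1)
  have e3: "Pa (int (3*Suc t)) (Suc t) = w3" unfolding w3_def by (simp add: add.commute)
  have e2: "Pa (int (3*Suc t) - 1) (Suc t) = w2" unfolding w2_def by (simp add: add.commute)
  show ?thesis unfolding e3 e2 a_def[symmetric] b_def[symmetric] using h1 h2 h3 hu by (simp add: algebra_simps)
qed

lemma AB_sum: "2 * (Pa (int (3*t)) t + Pa (int (3*t) - 1) t) = 8^t - C t"
proof (induction t)
  case 0
  then show ?case by (simp add: Pa_def C_def)
next
  case (Suc t)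
  then show ?case using step_ab[of t] by simp
qed

lemma AA_sum: "2 * (Pa (int (3*Suc t)) (Suc t) + Pa (int (3*t)) t) = 6 * 8^t - C (Suc t)"
  using step_ab[of t] AB_sum[of t] by simp

lemma split3:
  assumes "t \<le> n"
  shows "(\<Sum>j<Suc n. f j) = (\<Sum>j=0..<t. f j) + f t + (\<Sum>j\<in>{t+1..n}. (f j :: int))"
proof -
  have "(\<Sum>j<Suc n. f j) = (\<Sum>j=0..<Suc n. f j)" by (simp add: lessThan_atLeast0)
  also have "\<dots> = (\<Sum>j=0..<t. f j) + (\<Sum>j=t..<Suc n. f j)"
    using assms by (simp add: sum.atLeastLessThan_concat)
  also have "(\<Sum>j=t..<Suc n. f j) = f t + (\<Sum>j=Suc t..<Suc n. f j)"
    using assms by (intro sum.atLeast_Suc_lessThan) simp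
  also have "(\<Sum>j=Suc t..<Suc n. f j) = (\<Sum>j\<in>{t+1..n}. f j)"
    by (simp add: atLeastLessThanSuc_atLeastAtMost)
  finally show ?thesis by simp
qed

lemma D_form: "D t = 2 * Pa (int (3*t)) t + C t - Pa (int (3*t)) (3*t+1)"
proof -
  have "Pa (int (3*t)) (3*t+1) = (\<Sum>j=0..<t. U (int (3*t)) (int j)) + C t + (\<Sum>j\<in>{t+1..3*t}. U (int (3*t)) (int j))"
    unfolding Pa_def using split3[of t "3*t" "\<lambda>j. U (int (3*t)) (int j)"] U_C[of t] by simp
  moreover have "Pa (int (3*t)) t = (\<Sum>j=0..<t. U (int (3*t)) (int j))" by (simp add: Pa_def lessThan_atLeast0)
  ultimately show ?thesis unfolding D_def by simp
qed

lemma B_form: assumes "t \<ge> 1" shows "2 * B t = 4 * Pa (int (3*t) - 1) t + C t - 2 * Pa (int (3*t) - 1) (3*t+1)"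
proof -
  have "Pa (int (3*t) - 1) (3*t+1) = (\<Sum>j=0..<t. U (int (3*t) - 1) (int j)) + U (int (3*t) - 1) (int t) + (\<Sum>j\<in>{t+1..3*t}. U (int (3*t) - 1) (int j))"
    unfolding Pa_def using split3[of t "3*t" "\<lambda>j. U (int (3*t) - 1) (int j)"] by simp
  moreover have "Pa (int (3*t) - 1) t = (\<Sum>j=0..<t. U (int (3*t) - 1) (int j))" by (simp add: Pa_def lessThan_atLeast0)
  ultimately show ?thesis unfolding B_def using U_Cm[OF assms] by simp
qed

lemma D_rec: "D (Suc t) + D t = C t"
proof -
  have "3 * (D (Suc t) + D t) = 3 * C t"
    using D_form[of t] D_form[of "Suc t"] S3[of t] S3[of "Suc t"] AA_sum[of t] by simp
  then show ?thesis by simp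
qed

lemma D_0: "D 0 = 0" by (simp add: D_def)

lemma D_alt: "D t = (\<Sum>k<t. (-1) ^ k * C (t - 1 - k))"
proof (induction t)
  case 0 then show ?case by (simp add: D_0)
next
  case (Suc t)
  have "(\<Sum>k<Suc t. (-1::int) ^ k * C (Suc t - 1 - k)) = C t - (\<Sum>k<t. (-1) ^ k * C (t - 1 - k))"
    unfolding sum.lessThan_Suc_shift by (simp add: sum_negf)
  then show ?case using D_rec[of t] Suc.IH by simp
qed

lemma B_D: assumes "t \<ge> 1" shows "2 * (B t + D t) = C t"
proof -
  have "6 * (B t + D t) = 3 * C t"
    using B_form[OF assms] D_form[of t] S3[of t] S3m[OF assms] AB_sum[of t] by simp
  then show ?thesis by simp
qed

lemma C_mono: "2 * C t \<le> C (Suc t)"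
proof -
  have "(2*t) choose t \<le> (2*t+1) choose t"
  proof (cases t)
    case (Suc s)
    have "(2*t+1) choose t = Suc (2*t) choose Suc s" using Suc by simp
    also have "\<dots> = (2*t choose s) + (2*t choose Suc s)" by simp
    finally show ?thesis using Suc by simp
  qed simp
  moreover have "(2*Suc t) choose (Suc t) = ((2*t+1) choose t) + ((2*t+1) choose Suc t)" by simp
  ultimately have "(2*t) choose t \<le> (2*Suc t) choose (Suc t)" by linarith
  then have "int ((2*t) choose t) * 2^t \<le> int ((2*Suc t) choose (Suc t)) * 2^t" by simp
  then show ?thesis by (simp add: C_def)
qed

lemma C_pos: "C t > 0" by (simp add: C_def)

lemma D_bounds: "t \<ge> 1 \<Longrightarrow> 0 < D t \<and> 2 * D t < C t"
proof (induction t rule: dec_induct)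
  case base
  have "D 1 = 1" using D_rec[of 0] by (simp add: D_0 C_def)
  then show ?case by (simp add: C_def)
next
  case (step t)
  then show ?case using D_rec[of t] C_mono[of t] by simp
qed

lemma C_rec: "int (Suc n) * C (Suc n) = (8 * int n + 4) * C n"
proof -
  have a: "Suc (2*n) * (2*n choose n) = (Suc (2*n) choose Suc n) * Suc n"
    by (rule Suc_times_binomial_eq)
  have b: "Suc (2*n) choose Suc n = Suc (2*n) choose n"
    using binomial_symmetric[of n "Suc (2*n)"] by simp
  have c: "(2*Suc n) choose (Suc n) = (Suc (2*n) choose n) + (Suc (2*n) choose Suc n)" by simp
  have c': "(2*Suc n) choose (Suc n) = 2 * (Suc (2*n) choose n)" using b c by simp
  have "Suc n * ((2*Suc n) choose (Suc n)) = 2 * ((Suc (2*n) choose n) * Suc n)"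
    unfolding c' by simp
  also have "\<dots> = 2 * (Suc (2*n) * (2*n choose n))" using a b by simp
  finally have "Suc n * ((2*Suc n) choose (Suc n)) = 2 * (Suc (2*n) * (2*n choose n))" .
  then have "int (Suc n) * int ((2*Suc n) choose (Suc n)) = 2 * (int (Suc (2*n)) * int (2*n choose n))"
    by (metis of_nat_mult of_nat_numeral)
  then have "int (Suc n) * int ((2*Suc n) choose (Suc n)) * 2 ^ Suc n = (8 * int n + 4) * (int (2*n choose n) * 2^n)"
    by (simp add: algebra_simps)
  then show ?thesis by (simp add: C_def algebra_simps)
qed

definition G :: "real fps" where "G = Abs_fps (\<lambda>n. real_of_int (C n))"

lemma G_deriv: "(1 - 8 * fps_X) * fps_deriv G = 4 * G"
proof (rule fps_ext)
  fix n
  have r: "real (Suc n) * real_of_int (C (Suc n)) = (8 * real n + 4) * real_of_int (C n)"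
    using arg_cong[OF C_rec[of n], of real_of_int] by simp
  show "fps_nth ((1 - 8 * fps_X) * fps_deriv G) n = fps_nth (4 * G) n"
  proof (cases n)
    case 0
    then show ?thesis using r by (simp add: G_def fps_mult_nth algebra_simps numeral_fps_const)
  next
    case (Suc m)
    have "fps_nth ((1 - 8 * fps_X) * fps_deriv G) n = real (Suc n) * real_of_int (C (Suc n)) - 8 * (real n * real_of_int (C n))"
      using Suc by (simp add: G_def algebra_simps numeral_fps_const fps_const_mult_left)
    then show ?thesis using r by (simp add: G_def numeral_fps_const algebra_simps)
  qed
qed

lemma G0: "fps_nth G 0 = 1" by (simp add: G_def C_def)

lemma G_sq: "G^2 * (1 - 8 * fps_X) = 1"
proof -
  define H where "H = G^2 * (1 - 8 * fps_X)"
  have "fps_deriv H = 2 * G * ((1 - 8 * fps_X) * fps_deriv G) - 8 * G^2"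
    unfolding H_def by (simp add: fps_deriv_power algebra_simps power2_eq_square numeral_fps_const)
  also have "\<dots> = 0" unfolding G_deriv by (simp add: algebra_simps power2_eq_square)
  finally have "H = fps_const (fps_nth H 0)" by simp
  moreover have "fps_nth H 0 = 1" unfolding H_def by (simp add: G0 power2_eq_square)
  ultimately show ?thesis unfolding H_def by simp
qed

lemma s_sq: "sqrt_1m8z ^ 2 = 1 - 8 * fps_X"
proof -
  have "(fps_radical (\<lambda>k x. root k x) (Suc 1) (1 - 8 * fps_X)) ^ (Suc 1) = (1 - 8 * fps_X :: real fps)"
    by (subst power_radical[symmetric]) (simp_all add: numeral_fps_const)
  then show ?thesis unfolding sqrt_1m8z_def by (simp add: numeral_2_eq_2)
qed

lemma s0: "fps_nth sqrt_1m8z 0 = 1"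
  unfolding sqrt_1m8z_def by (simp add: numeral_fps_const)

lemma Gs: "G * sqrt_1m8z = 1"
proof -
  have "(G * sqrt_1m8z)^2 = 1" using G_sq s_sq by (simp add: power_mult_distrib)
  then have "(G * sqrt_1m8z - 1) * (G * sqrt_1m8z + 1) = 0" by (simp add: algebra_simps power2_eq_square)
  moreover have "G * sqrt_1m8z + 1 \<noteq> 0"
  proof
    assume "G * sqrt_1m8z + 1 = 0"
    then have "fps_nth (G * sqrt_1m8z + 1) 0 = 0" by simp
    then show False by (simp add: G0 s0)
  qed
  ultimately show ?thesis by simp
qed

lemma fps_part: "Abs_fps (\<lambda>t. if t = 0 then 0 else real_of_int (D t)) = fps_X / ((1 + fps_X) * sqrt_1m8z)"
proof -
  define A where "A = Abs_fps (\<lambda>t. if t = 0 then 0 else real_of_int (D t))"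
  have A: "A * (1 + fps_X) = fps_X * G"
  proof (rule fps_ext)
    fix n
    show "fps_nth (A * (1 + fps_X)) n = fps_nth (fps_X * G) n"
    proof (cases n)
      case 0 then show ?thesis by (simp add: A_def)
    next
      case (Suc m)
      have "real_of_int (D (Suc m)) + real_of_int (D m) = real_of_int (C m)"
        using arg_cong[OF D_rec[of m], of real_of_int] by simp
      then show ?thesis using Suc D_0 D_rec[of 0] by (simp add: A_def G_def algebra_simps mult.commute[of _ fps_X])
    qed
  qed
  have n1: "fps_nth ((1 + fps_X) * sqrt_1m8z) 0 = 1" by (simp add: s0)
  have u: "(1 + fps_X) * sqrt_1m8z \<noteq> 0" using n1 by (metis fps_zero_nth zero_neq_one)
  have "A * ((1 + fps_X) * sqrt_1m8z) = fps_X"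
    by (simp add: mult.assoc[symmetric] A) (simp add: mult.assoc Gs)
  then have "fps_X / ((1 + fps_X) * sqrt_1m8z) = A" using u by (metis nonzero_mult_div_cancel_right)
  then show ?thesis unfolding A_def by simp
qed

theorem mainTheorem10:
  shows "(\<forall>t::nat. t \<ge> 1 \<longrightarrow>
            D t = (\<Sum>k<t. (-1) ^ k * C (t - 1 - k))
          \<and> (0 < D t \<and> real_of_int (D t) < real_of_int (C t) / 2)
          \<and> (real_of_int (B t) = real_of_int (C t) / 2 - real_of_int (D t)
             \<and> 0 < B t \<and> real_of_int (B t) < real_of_int (C t) / 2))
       \<and> Abs_fps (\<lambda>t. if t = 0 then 0 else real_of_int (D t))
           = fps_X / ((1 + fps_X) * sqrt_1m8z)"
proof (intro conjI allI impI)
  fix t :: nat assume t: "t \<ge> 1"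
  have bd: "0 < D t" "2 * D t < C t" using D_bounds[OF t] by auto
  have bdr: "2 * real_of_int (D t) < real_of_int (C t)" using bd(2) by linarith
  have bb: "2 * (B t + D t) = C t" using B_D[OF t] .
  have bbr: "2 * (real_of_int (B t) + real_of_int (D t)) = real_of_int (C t)"
    using arg_cong[OF bb, of real_of_int] by simp
  show "D t = (\<Sum>k<t. (-1) ^ k * C (t - 1 - k))" by (rule D_alt)
  show "0 < D t" by (rule bd(1))
  show "real_of_int (D t) < real_of_int (C t) / 2" using bdr by simp
  show "real_of_int (B t) = real_of_int (C t) / 2 - real_of_int (D t)" using bbr by simp
  show "0 < B t" using bb bd by (smt (verit))
  show "real_of_int (B t) < real_of_int (C t) / 2" using bbr bd(1) by simp
next
  show "Abs_fps (\<lambda>t. if t = 0 then 0 else real_of_int (D t)) = fps_X / ((1 + fps_X) * sqrt_1m8z)"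
    by (rule fps_part)
qed

end
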